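(* Let $X,Y \in \mathcal{B(H)}$ and $q \in \mathcal{D'}$. Then \begin{itemize} \item[(a)] $\max\{w_q(X-Y),w_q(X+Y)\} \le w_q\left(\begin{bmatrix} X & Y\\ Y & X \end{bmatrix}\right) \le \max\{ \|X-Y\|, \|X+Y\|\}$, \item[(b)] $\frac{1}{2}\max\{w_q(X+Y),w_q(X-Y)\} \le w_q \left(\begin{bmatrix} 0 & X\\ Y & 0 \end{bmatrix}\right) \le \frac{1}{2}(\|X+Y\|+\|X-Y\|)$. \end{itemize}
   Context: $\mathcal{H}$ is a complex Hilbert space, $\mathcal{B(H)}$ the algebra of bounded linear operators on $\mathcal{H}$ with the operator norm, and $2\times 2$ operator matrices act on $\mathcal{H}\oplus\mathcal{H}$. $\mathcal{D}$ is the closed unit disc in $\mathbb{C}$ and $\mathcal{D'}=\mathcal{D}\setminus\{0\}$. For $|q|\le 1$, $W_q(T)=\{\langle Tx,y\rangle : \|x\|=\|y\|=1,\ \langle x,y\rangle=q\}$ and $w_q(T)=\sup_{w\in W_q(T)}|w|$. *)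

theory Defs
  imports "HOL-Analysis.Analysis"
begin

class complex_inner = real_normed_vector +
  fixes scaleC :: "complex \<Rightarrow> 'a \<Rightarrow> 'a" (infixr \<open>*\<^sub>C\<close> 75)
    and cinner :: "'a \<Rightarrow> 'a \<Rightarrow> complex"
  assumes scaleC_add_right: "a *\<^sub>C (x + y) = a *\<^sub>C x + a *\<^sub>C y"
    and scaleC_add_left: "(a + b) *\<^sub>C x = a *\<^sub>C x + b *\<^sub>C x"
    and scaleC_scaleC: "a *\<^sub>C (b *\<^sub>C x) = (a * b) *\<^sub>C x"
    and scaleC_one: "1 *\<^sub>C x = x"
    and scaleR_scaleC: "scaleR r x = complex_of_real r *\<^sub>C x"
    and cinner_add_left: "cinner (x + y) z = cinner x z + cinner y z"
    and cinner_scaleC_left: "cinner (a *\<^sub>C x) y = a * cinner x y"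
    and cinner_commute: "cinner x y = cnj (cinner y x)"
    and cinner_ge_zero: "0 \<le> Re (cinner x x)"
    and cinner_eq_zero_iff: "cinner x x = 0 \<longleftrightarrow> x = 0"
    and norm_eq_sqrt_cinner: "norm x = sqrt (Re (cinner x x))"

class chilbert_space = complex_inner + complete_space

instantiation complex :: complex_inner
begin
definition scaleC_complex :: "complex \<Rightarrow> complex \<Rightarrow> complex" where
  "scaleC_complex a x = a * x"
definition cinner_complex :: "complex \<Rightarrow> complex \<Rightarrow> complex" where
  "cinner_complex x y = x * cnj y"
instance
proof
  fix a b :: complex and x y z :: complex and r :: real
  show "a *\<^sub>C (x + y) = a *\<^sub>C x + a *\<^sub>C y" by (simp add: scaleC_complex_def algebra_simps)
  show "(a + b) *\<^sub>C x = a *\<^sub>C x + b *\<^sub>C x" by (simp add: scaleC_complex_def algebra_simps)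
  show "a *\<^sub>C (b *\<^sub>C x) = (a * b) *\<^sub>C x" by (simp add: scaleC_complex_def)
  show "1 *\<^sub>C x = x" by (simp add: scaleC_complex_def)
  show "scaleR r x = complex_of_real r *\<^sub>C x" by (simp add: scaleC_complex_def scaleR_conv_of_real)
  show "cinner (x + y) z = cinner x z + cinner y z" by (simp add: cinner_complex_def algebra_simps)
  show "cinner (a *\<^sub>C x) y = a * cinner x y" by (simp add: cinner_complex_def scaleC_complex_def)
  show "cinner x y = cnj (cinner y x)" by (simp add: cinner_complex_def)
  show "0 \<le> Re (cinner x x)" by (simp add: cinner_complex_def)
  show "cinner x x = 0 \<longleftrightarrow> x = 0" by (simp add: cinner_complex_def)
  show "norm x = sqrt (Re (cinner x x))"
    by (simp add: cinner_complex_def complex_mult_cnj cmod_def)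
qed
end

instance complex :: chilbert_space ..

text \<open>Elements of B(H): bounded complex-linear maps; the operator norm is onorm.\<close>
definition bounded_clinear_op :: "('a::complex_inner \<Rightarrow> 'a) \<Rightarrow> bool" where
  "bounded_clinear_op T \<longleftrightarrow> bounded_linear T \<and> (\<forall>c x. T (c *\<^sub>C x) = c *\<^sub>C T x)"

text \<open>Inner product of the Hilbert direct sum H \<oplus> H (the product norm on
  'a \<times> 'a is exactly the induced norm sqrt(norm x1^2 + norm x2^2)).\<close>
definition dsum_inner :: "'a::complex_inner \<times> 'a \<Rightarrow> 'a \<times> 'a \<Rightarrow> complex" where
  "dsum_inner u v = cinner (fst u) (fst v) + cinner (snd u) (snd v)"

definition opmat :: "('a::complex_inner \<Rightarrow> 'a) \<Rightarrow> ('a \<Rightarrow> 'a) \<Rightarrow> ('a \<Rightarrow> 'a) \<Rightarrow> ('a \<Rightarrow> 'a)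
    \<Rightarrow> 'a \<times> 'a \<Rightarrow> 'a \<times> 'a" where
  "opmat A B C D = (\<lambda>(x1, x2). (A x1 + B x2, C x1 + D x2))"

definition qnum_range_wrt :: "('b::real_normed_vector \<Rightarrow> 'b \<Rightarrow> complex) \<Rightarrow> complex
    \<Rightarrow> ('b \<Rightarrow> 'b) \<Rightarrow> complex set" where
  "qnum_range_wrt ip q T =
     {ip (T x) y | x y. norm x = 1 \<and> norm y = 1 \<and> ip x y = q}"

text \<open>q-numerical radius; the supremum of the empty set is taken to be 0.\<close>
definition qnum_radius_wrt :: "('b::real_normed_vector \<Rightarrow> 'b \<Rightarrow> complex) \<Rightarrow> complex
    \<Rightarrow> ('b \<Rightarrow> 'b) \<Rightarrow> real" where
  "qnum_radius_wrt ip q T = Sup (insert 0 (cmod ` qnum_range_wrt ip q T))"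

abbreviation Wq :: "complex \<Rightarrow> ('a::complex_inner \<Rightarrow> 'a) \<Rightarrow> complex set" where
  "Wq q T \<equiv> qnum_range_wrt cinner q T"

abbreviation wq :: "complex \<Rightarrow> ('a::complex_inner \<Rightarrow> 'a) \<Rightarrow> real" where
  "wq q T \<equiv> qnum_radius_wrt cinner q T"

abbreviation wq2 :: "complex \<Rightarrow> ('a::complex_inner \<times> 'a \<Rightarrow> 'a \<times> 'a) \<Rightarrow> real" where
  "wq2 q T \<equiv> qnum_radius_wrt dsum_inner q T"

end

theory Submission
  imports Defs
begin


context complex_inner begin

lemma cinner_add_right: "cinner x (y + z) = cinner x y + cinner x z"
proof -
  have "cinner x (y + z) = cnj (cinner (y + z) x)" by (rule cinner_commute)
  also have "\<dots> = cnj (cinner y x) + cnj (cinner z x)" by (simp add: cinner_add_left)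
  also have "\<dots> = cinner x y + cinner x z" by (simp only: cinner_commute[of x y] cinner_commute[of x z])
  finally show ?thesis .
qed

lemma cinner_scaleC_right: "cinner x (a *\<^sub>C y) = cnj a * cinner x y"
proof -
  have "cinner x (a *\<^sub>C y) = cnj (cinner (a *\<^sub>C y) x)" by (rule cinner_commute)
  also have "\<dots> = cnj a * cnj (cinner y x)" by (simp add: cinner_scaleC_left)
  also have "\<dots> = cnj a * cinner x y" by (simp only: cinner_commute[of x y])
  finally show ?thesis .
qed

lemma cinner_zero_left[simp]: "cinner 0 y = 0"
  using cinner_add_left[of 0 0 y] by simp

lemma cinner_zero_right[simp]: "cinner x 0 = 0"
  using cinner_add_right[of x 0 0] by simp

lemma cinner_minus_left: "cinner (- x) y = - cinner x y"
proof -
  have h: "cinner x y + cinner (- x) y = 0" using cinner_add_left[of x "-x" y] by simp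
  have "cinner (- x) y = (cinner x y + cinner (- x) y) - cinner x y" by simp
  also have "\<dots> = - cinner x y" using h by simp
  finally show ?thesis .
qed

lemma cinner_diff_left: "cinner (x - y) z = cinner x z - cinner y z"
  using cinner_add_left[of x "-y" z] cinner_minus_left[of y z] by simp

lemma cinner_minus_right: "cinner x (- y) = - cinner x y"
proof -
  have "cinner x (- y) = cnj (cinner (- y) x)" by (rule cinner_commute)
  also have "\<dots> = - cnj (cinner y x)" by (simp add: cinner_minus_left)
  also have "\<dots> = - cinner x y" by (simp only: cinner_commute[of x y])
  finally show ?thesis .
qed

lemma cinner_diff_right: "cinner x (y - z) = cinner x y - cinner x z"
  using cinner_add_right[of x y "-z"] cinner_minus_right[of x z] by simp

lemma cinner_scaleR_left: "cinner (scaleR r x) y = of_real r * cinner x y"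
  by (simp add: scaleR_scaleC cinner_scaleC_left)

lemma cinner_scaleR_right: "cinner x (scaleR r y) = of_real r * cinner x y"
  by (simp add: scaleR_scaleC cinner_scaleC_right)

lemma cinner_self: "cinner x x = complex_of_real ((norm x)\<^sup>2)"
proof -
  have "Im (cinner x x) = 0" using cinner_commute[of x x]
  proof -
    have "Im (cinner x x) = Im (cnj (cinner x x))" by (metis cinner_commute)
    then show ?thesis by simp
  qed
  moreover have "Re (cinner x x) = (norm x)\<^sup>2"
    using norm_eq_sqrt_cinner[of x] cinner_ge_zero[of x] by simp
  ultimately show ?thesis by (simp add: complex_eq_iff)
qed

lemma norm_scaleC: "norm (a *\<^sub>C x) = cmod a * norm x"
proof -
  have "cinner (a *\<^sub>C x) (a *\<^sub>C x) = (a * cnj a) * cinner x x"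
    by (simp only: cinner_scaleC_left cinner_scaleC_right mult.assoc mult.left_commute)
  also have "a * cnj a = complex_of_real ((cmod a)\<^sup>2)" by (rule complex_norm_square[symmetric])
  finally have "complex_of_real ((norm (a *\<^sub>C x))\<^sup>2) = complex_of_real ((cmod a)\<^sup>2) * complex_of_real ((norm x)\<^sup>2)"
    by (simp only: cinner_self)
  then have "(norm (a *\<^sub>C x))\<^sup>2 = (cmod a)\<^sup>2 * (norm x)\<^sup>2"
    by (simp only: of_real_mult[symmetric] of_real_eq_iff)
  then have "(norm (a *\<^sub>C x))\<^sup>2 = (cmod a * norm x)\<^sup>2" by (simp only: power_mult_distrib)
  then show ?thesis by (rule power2_eq_imp_eq) simp_all
qed

lemma norm_sq_add: "(norm (x + y))\<^sup>2 = (norm x)\<^sup>2 + (norm y)\<^sup>2 + 2 * Re (cinner x y)"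
proof -
  have "cinner (x + y) (x + y) = cinner x x + cinner y y + cinner x y + cnj (cinner x y)"
    by (simp add: cinner_add_left cinner_add_right cinner_commute[of y x])
  then have "Re (cinner (x + y) (x + y)) = Re (cinner x x + cinner y y + cinner x y + cnj (cinner x y))" by simp
  then show ?thesis by (simp only: cinner_self) simp
qed

lemma norm_sq_diff: "(norm (x - y))\<^sup>2 = (norm x)\<^sup>2 + (norm y)\<^sup>2 - 2 * Re (cinner x y)"
proof -
  have "(norm (x + - y))\<^sup>2 = (norm x)\<^sup>2 + (norm (- y))\<^sup>2 + 2 * Re (cinner x (- y))"
    by (rule norm_sq_add)
  then show ?thesis unfolding diff_conv_add_uminus norm_minus_cancel cinner_minus_right by simp
qed

lemma parallelogram: "(norm (x + y))\<^sup>2 + (norm (x - y))\<^sup>2 = 2 * (norm x)\<^sup>2 + 2 * (norm y)\<^sup>2"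
  using norm_sq_add[of x y] norm_sq_diff[of x y] by linarith

lemma cauchy_schwarz: "cmod (cinner x y) \<le> norm x * norm y"
proof (cases "y = 0")
  case True then show ?thesis by simp
next
  case False
  define n where "n = (norm y)\<^sup>2"
  have n: "n > 0" using False by (simp add: n_def)
  define c where "c = cinner x y"
  define t where "t = c / of_real n"
  have e1: "(norm (x - t *\<^sub>C y))\<^sup>2 = (norm x)\<^sup>2 + (cmod t * norm y)\<^sup>2 - 2 * Re (cnj t * c)"
    by (simp only: norm_sq_diff norm_scaleC cinner_scaleC_right c_def)
  have e2: "cnj t * c = of_real ((cmod c)\<^sup>2 / n)"
  proof -
    have "cnj t * c = (cnj c * c) / of_real n" by (simp add: t_def)
    also have "cnj c * c = of_real ((cmod c)\<^sup>2)" by (simp only: mult.commute[of "cnj c" c] complex_norm_square)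
    finally show ?thesis by simp
  qed
  have e3: "(cmod t * norm y)\<^sup>2 = (cmod c)\<^sup>2 / n"
  proof -
    have "cmod t = cmod c / n" using n by (simp add: t_def norm_divide)
    then have "(cmod t * norm y)\<^sup>2 = (cmod c)\<^sup>2 * n / n\<^sup>2"
      by (simp add: n_def power_mult_distrib power_divide)
    also have "\<dots> = (cmod c)\<^sup>2 / n" using n by (simp add: power2_eq_square)
    finally show ?thesis .
  qed
  have "0 \<le> (norm (x - t *\<^sub>C y))\<^sup>2" by simp
  then have "0 \<le> (norm x)\<^sup>2 + (cmod c)\<^sup>2 / n - 2 * ((cmod c)\<^sup>2 / n)"
    using e1 e2 e3 by simp
  then have "(cmod c)\<^sup>2 / n \<le> (norm x)\<^sup>2" by simp
  then have "(cmod c)\<^sup>2 \<le> (norm x)\<^sup>2 * n" using n by (simp add: divide_le_eq)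
  then have "(cmod c)\<^sup>2 \<le> (norm x * norm y)\<^sup>2" by (simp add: n_def power_mult_distrib)
  then show ?thesis unfolding c_def by (simp add: power2_le_iff_abs_le)
qed

end



lemma scaleC_zero_right[simp]: "(c::complex) *\<^sub>C (0::'a::complex_inner) = 0"
  using scaleC_add_right[of c "0::'a" 0] by simp

instantiation prod :: (complex_inner, complex_inner) complex_inner
begin
definition scaleC_prod_def: "c *\<^sub>C u = (c *\<^sub>C fst u, c *\<^sub>C snd u)"
definition cinner_prod_def: "cinner u v = cinner (fst u) (fst v) + cinner (snd u) (snd v)"
instance
proof
  fix a b :: complex and x y z :: "'a \<times> 'b" and r :: real
  show "a *\<^sub>C (x + y) = a *\<^sub>C x + a *\<^sub>C y" by (simp add: scaleC_prod_def scaleC_add_right)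
  show "(a + b) *\<^sub>C x = a *\<^sub>C x + b *\<^sub>C x" by (simp add: scaleC_prod_def scaleC_add_left)
  show "a *\<^sub>C (b *\<^sub>C x) = (a * b) *\<^sub>C x" by (simp add: scaleC_prod_def scaleC_scaleC)
  show "1 *\<^sub>C x = x" by (simp add: scaleC_prod_def scaleC_one)
  show "scaleR r x = complex_of_real r *\<^sub>C x"
    by (simp add: scaleC_prod_def scaleR_prod_def scaleR_scaleC)
  show "cinner (x + y) z = cinner x z + cinner y z"
    by (simp add: cinner_prod_def cinner_add_left)
  show "cinner (a *\<^sub>C x) y = a * cinner x y"
    by (simp add: cinner_prod_def scaleC_prod_def cinner_scaleC_left algebra_simps)
  show "cinner x y = cnj (cinner y x)"
    by (simp add: cinner_prod_def cinner_commute[of "fst x"] cinner_commute[of "snd x"])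
  have cs: "cinner x x = complex_of_real ((norm (fst x))\<^sup>2 + (norm (snd x))\<^sup>2)"
    by (simp add: cinner_prod_def cinner_self)
  show "0 \<le> Re (cinner x x)" by (simp add: cs)
  show "cinner x x = 0 \<longleftrightarrow> x = 0"
  proof -
    have "cinner x x = 0 \<longleftrightarrow> (norm (fst x))\<^sup>2 + (norm (snd x))\<^sup>2 = 0"
      by (simp only: cs of_real_eq_0_iff)
    also have "\<dots> \<longleftrightarrow> fst x = 0 \<and> snd x = 0"
      by (simp add: add_nonneg_eq_0_iff)
    also have "\<dots> \<longleftrightarrow> x = 0" by (simp add: prod_eq_iff)
    finally show ?thesis .
  qed
  show "norm x = sqrt (Re (cinner x x))"
    using norm_Pair[of "fst x" "snd x"] by (simp add: cs)
qed
end

lemma dsum_inner_eq: "dsum_inner = cinner"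
  by (intro ext) (simp add: dsum_inner_def cinner_prod_def)

lemma radius_le:
  assumes "0 \<le> B" "\<And>x y. norm x = 1 \<Longrightarrow> norm y = 1 \<Longrightarrow> ip x y = q \<Longrightarrow> cmod (ip (T x) y) \<le> B"
  shows "qnum_radius_wrt ip q T \<le> B"
  unfolding qnum_radius_wrt_def qnum_range_wrt_def
  by (rule cSup_least) (auto intro: assms)

lemma radius_ge:
  assumes "0 \<le> B" "\<And>x y. norm x = 1 \<Longrightarrow> norm y = 1 \<Longrightarrow> ip x y = q \<Longrightarrow> cmod (ip (T x) y) \<le> B"
    and "norm x = 1" "norm y = 1" "ip x y = q"
  shows "cmod (ip (T x) y) \<le> qnum_radius_wrt ip q T"
  unfolding qnum_radius_wrt_def
proof (rule cSup_upper)
  show "cmod (ip (T x) y) \<in> insert 0 (cmod ` qnum_range_wrt ip q T)"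
    using assms(3-5) unfolding qnum_range_wrt_def by blast
  show "bdd_above (insert 0 (cmod ` qnum_range_wrt ip q T))"
    unfolding bdd_above_def qnum_range_wrt_def using assms(1,2) by blast
qed

lemma radius_nonneg:
  assumes "0 \<le> B" "\<And>x y. norm x = 1 \<Longrightarrow> norm y = 1 \<Longrightarrow> ip x y = q \<Longrightarrow> cmod (ip (T x) y) \<le> B"
  shows "0 \<le> qnum_radius_wrt ip q T"
  unfolding qnum_radius_wrt_def
proof (rule cSup_upper)
  show "bdd_above (insert 0 (cmod ` qnum_range_wrt ip q T))"
    unfolding bdd_above_def qnum_range_wrt_def using assms(1,2) by blast
qed simp

lemma pair_norm_sq: "(norm (a, b))\<^sup>2 = (norm a)\<^sup>2 + (norm b)\<^sup>2"
  by (simp add: norm_Pair)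

lemma pair_unit:
  fixes x :: "'a::complex_inner"
  assumes "norm x = 1" "(cmod a)\<^sup>2 + (cmod b)\<^sup>2 = 1"
  shows "norm (a *\<^sub>C x, b *\<^sub>C x) = 1"
  using assms by (simp add: norm_Pair norm_scaleC power_mult_distrib)

lemma pair_inner:
  fixes x y :: "'a::complex_inner"
  assumes "a * cnj a + b * cnj b = 1"
  shows "cinner (a *\<^sub>C x, b *\<^sub>C x) (a *\<^sub>C y, b *\<^sub>C y) = cinner x y"
proof -
  have "cinner (a *\<^sub>C x, b *\<^sub>C x) (a *\<^sub>C y, b *\<^sub>C y) = (a * cnj a + b * cnj b) * cinner x y"
    by (simp add: cinner_prod_def cinner_scaleC_left cinner_scaleC_right algebra_simps)
  then show ?thesis using assms by simp
qed

lemma opmat_inner: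
  fixes A B C D :: "'a::complex_inner \<Rightarrow> 'a"
  assumes "\<And>c z. A (c *\<^sub>C z) = c *\<^sub>C A z" "\<And>c z. B (c *\<^sub>C z) = c *\<^sub>C B z"
    "\<And>c z. C (c *\<^sub>C z) = c *\<^sub>C C z" "\<And>c z. D (c *\<^sub>C z) = c *\<^sub>C D z"
  shows "cinner (opmat A B C D (a *\<^sub>C x, b *\<^sub>C x)) (a *\<^sub>C y, b *\<^sub>C y)
    = a * cnj a * cinner (A x) y + b * cnj a * cinner (B x) y + a * cnj b * cinner (C x) y
      + b * cnj b * cinner (D x) y"
  by (simp add: opmat_def assms cinner_prod_def cinner_add_left cinner_scaleC_left
      cinner_scaleC_right algebra_simps)


lemma M_bound:
  fixes X Y :: "'a::complex_inner \<Rightarrow> 'a"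
  assumes bX: "bounded_linear X" and bY: "bounded_linear Y" and u1: "norm u = 1"
  shows "norm (opmat X Y Y X u) \<le> max (onorm (\<lambda>x. X x - Y x)) (onorm (\<lambda>x. X x + Y x))"
proof -
  obtain x1 x2 where u: "u = (x1, x2)" by (cases u)
  define m where "m = max (onorm (\<lambda>x. X x - Y x)) (onorm (\<lambda>x. X x + Y x))"
  define P where "P = X x1 + Y x2"
  define Q where "Q = Y x1 + X x2"
  have Mu: "opmat X Y Y X u = (P, Q)" by (simp add: u opmat_def P_def Q_def)
  have blp: "bounded_linear (\<lambda>x. X x + Y x)" using bX bY by (rule bounded_linear_add)
  have blm: "bounded_linear (\<lambda>x. X x - Y x)" using bX bY by (rule bounded_linear_sub)
  have m0: "0 \<le> m" using onorm_pos_le[OF blp] by (simp add: m_def le_max_iff_disj)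
  have PQ1: "P + Q = X (x1 + x2) + Y (x1 + x2)"
    by (simp add: P_def Q_def linear_add[OF bounded_linear.linear[OF bX]] linear_add[OF bounded_linear.linear[OF bY]] algebra_simps)
  have PQ2: "P - Q = X (x1 - x2) - Y (x1 - x2)"
    by (simp add: P_def Q_def linear_diff[OF bounded_linear.linear[OF bX]] linear_diff[OF bounded_linear.linear[OF bY]] algebra_simps)
  have n1: "norm (P + Q) \<le> m * norm (x1 + x2)"
  proof -
    have "norm (P + Q) \<le> onorm (\<lambda>x. X x + Y x) * norm (x1 + x2)"
      unfolding PQ1 by (rule onorm[OF blp])
    also have "\<dots> \<le> m * norm (x1 + x2)" by (rule mult_right_mono) (simp_all add: m_def)
    finally show ?thesis .
  qed
  have n2: "norm (P - Q) \<le> m * norm (x1 - x2)"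
  proof -
    have "norm (P - Q) \<le> onorm (\<lambda>x. X x - Y x) * norm (x1 - x2)"
      unfolding PQ2 by (rule onorm[OF blm])
    also have "\<dots> \<le> m * norm (x1 - x2)" by (rule mult_right_mono) (simp_all add: m_def)
    finally show ?thesis .
  qed
  have s1: "(norm (P + Q))\<^sup>2 \<le> m\<^sup>2 * (norm (x1 + x2))\<^sup>2"
    using power_mono[OF n1, of 2] by (simp add: power_mult_distrib)
  have s2: "(norm (P - Q))\<^sup>2 \<le> m\<^sup>2 * (norm (x1 - x2))\<^sup>2"
    using power_mono[OF n2, of 2] by (simp add: power_mult_distrib)
  have unit: "(norm x1)\<^sup>2 + (norm x2)\<^sup>2 = 1"
    using u1 pair_norm_sq[of x1 x2] by (simp add: u)
  have "(norm (P + Q))\<^sup>2 + (norm (P - Q))\<^sup>2 \<le> m\<^sup>2 * ((norm (x1 + x2))\<^sup>2 + (norm (x1 - x2))\<^sup>2)"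
    using s1 s2 by (simp add: distrib_left)
  also have "\<dots> = m\<^sup>2 * 2 * ((norm x1)\<^sup>2 + (norm x2)\<^sup>2)"
    by (simp only: parallelogram) (simp add: algebra_simps)
  also have "\<dots> = m\<^sup>2 * 2" by (simp only: unit mult_1_right)
  finally have "2 * (norm P)\<^sup>2 + 2 * (norm Q)\<^sup>2 \<le> m\<^sup>2 * 2" by (simp only: parallelogram)
  then have "(norm (P, Q))\<^sup>2 \<le> m\<^sup>2" by (simp add: pair_norm_sq)
  then have "norm (P, Q) \<le> m" using m0 by (rule power2_le_imp_le)
  then show ?thesis by (simp add: Mu m_def)
qed

lemma N_bound:
  fixes X Y :: "'a::complex_inner \<Rightarrow> 'a"
  assumes bX: "bounded_linear X" and bY: "bounded_linear Y" and u1: "norm u = 1"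
  shows "norm (opmat (\<lambda>_. 0) X Y (\<lambda>_. 0) u) \<le> (1/2) * (onorm (\<lambda>x. X x + Y x) + onorm (\<lambda>x. X x - Y x))"
proof -
  obtain x1 x2 where u: "u = (x1, x2)" by (cases u)
  define K where "K = (1/2) * (onorm (\<lambda>x. X x + Y x) + onorm (\<lambda>x. X x - Y x))"
  have Nu: "opmat (\<lambda>_. 0) X Y (\<lambda>_. 0) u = (X x2, Y x1)" by (simp add: u opmat_def)
  have blp: "bounded_linear (\<lambda>x. X x + Y x)" using bX bY by (rule bounded_linear_add)
  have blm: "bounded_linear (\<lambda>x. X x - Y x)" using bX bY by (rule bounded_linear_sub)
  have K0: "0 \<le> K" using onorm_pos_le[OF blp] onorm_pos_le[OF blm] by (simp add: K_def)
  have bXz: "norm (X z) \<le> K * norm z" for z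
  proof -
    have "2 * norm (X z) = norm ((X z + Y z) + (X z - Y z))"
      by (simp add: scaleR_2[symmetric] del: scaleR_2)
    also have "\<dots> \<le> norm (X z + Y z) + norm (X z - Y z)" by (rule norm_triangle_ineq)
    also have "\<dots> \<le> onorm (\<lambda>x. X x + Y x) * norm z + onorm (\<lambda>x. X x - Y x) * norm z"
      using onorm[OF blp, of z] onorm[OF blm, of z] by simp
    finally show ?thesis by (simp add: K_def algebra_simps)
  qed
  have bYz: "norm (Y z) \<le> K * norm z" for z
  proof -
    have "2 * norm (Y z) = norm ((X z + Y z) - (X z - Y z))"
      by (simp add: scaleR_2[symmetric] del: scaleR_2)
    also have "\<dots> \<le> norm (X z + Y z) + norm (X z - Y z)" by (rule norm_triangle_ineq4)
    also have "\<dots> \<le> onorm (\<lambda>x. X x + Y x) * norm z + onorm (\<lambda>x. X x - Y x) * norm z"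
      using onorm[OF blp, of z] onorm[OF blm, of z] by simp
    finally show ?thesis by (simp add: K_def algebra_simps)
  qed
  have s1: "(norm (X x2))\<^sup>2 \<le> K\<^sup>2 * (norm x2)\<^sup>2"
    using power_mono[OF bXz[of x2], of 2] by (simp add: power_mult_distrib)
  have s2: "(norm (Y x1))\<^sup>2 \<le> K\<^sup>2 * (norm x1)\<^sup>2"
    using power_mono[OF bYz[of x1], of 2] by (simp add: power_mult_distrib)
  have unit: "(norm x1)\<^sup>2 + (norm x2)\<^sup>2 = 1"
    using u1 pair_norm_sq[of x1 x2] by (simp add: u)
  have "(norm (X x2, Y x1))\<^sup>2 \<le> K\<^sup>2 * ((norm x1)\<^sup>2 + (norm x2)\<^sup>2)"
    using s1 s2 by (simp add: pair_norm_sq distrib_left)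
  then have "(norm (X x2, Y x1))\<^sup>2 \<le> K\<^sup>2" by (simp add: unit)
  then have "norm (X x2, Y x1) \<le> K" using K0 by (rule power2_le_imp_le)
  then show ?thesis by (simp add: Nu K_def)
qed

lemma pick:
  fixes T :: "'a::complex_inner \<times> 'a \<Rightarrow> 'a \<times> 'a" and S :: "'a \<Rightarrow> 'a"
  assumes B0: "0 \<le> B"
    and bound: "\<And>u v. norm u = 1 \<Longrightarrow> norm v = 1 \<Longrightarrow> cinner u v = q \<Longrightarrow> cmod (cinner (T u) v) \<le> B"
    and ab1: "a * cnj a + b * cnj b = 1" and ab2: "(cmod a)\<^sup>2 + (cmod b)\<^sup>2 = 1"
    and k: "k > 0"
    and val: "\<And>x y. cmod (cinner (S x) y) = k * cmod (cinner (T (a *\<^sub>C x, b *\<^sub>C x)) (a *\<^sub>C y, b *\<^sub>C y))"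
  shows "wq q S \<le> k * wq2 q T"
proof -
  have w0: "0 \<le> wq2 q T" unfolding dsum_inner_eq by (rule radius_nonneg[where ip=cinner and T=T and q=q, OF B0 bound])
  show ?thesis
  proof (rule radius_le)
    show "0 \<le> k * wq2 q T" using k w0 by simp
    fix x y :: 'a assume xy: "norm x = 1" "norm y = 1" "cinner x y = q"
    have "cmod (cinner (T (a *\<^sub>C x, b *\<^sub>C x)) (a *\<^sub>C y, b *\<^sub>C y)) \<le> wq2 q T"
      unfolding dsum_inner_eq
      by (rule radius_ge[where ip=cinner and T=T and q=q, OF B0 bound]) (use xy pair_unit[OF _ ab2] pair_inner[OF ab1] in auto)
    then show "cmod (cinner (S x) y) \<le> k * wq2 q T" using val[of x y] k by simp
  qed
qed


theorem proposition3p1: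
  fixes X Y :: "'a::chilbert_space \<Rightarrow> 'a" and q :: complex
  assumes "bounded_clinear_op X" and "bounded_clinear_op Y"
    and "cmod q \<le> 1" and "q \<noteq> 0"
  shows "max (wq q (\<lambda>x. X x - Y x)) (wq q (\<lambda>x. X x + Y x)) \<le> wq2 q (opmat X Y Y X)
       \<and> wq2 q (opmat X Y Y X) \<le> max (onorm (\<lambda>x. X x - Y x)) (onorm (\<lambda>x. X x + Y x))
       \<and> (1/2) * max (wq q (\<lambda>x. X x + Y x)) (wq q (\<lambda>x. X x - Y x)) \<le> wq2 q (opmat (\<lambda>_. 0) X Y (\<lambda>_. 0))
       \<and> wq2 q (opmat (\<lambda>_. 0) X Y (\<lambda>_. 0)) \<le> (1/2) * (onorm (\<lambda>x. X x + Y x) + onorm (\<lambda>x. X x - Y x))"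
proof -
  have bX: "bounded_linear X" and cX: "\<And>c z. X (c *\<^sub>C z) = c *\<^sub>C X z"
    using assms(1) unfolding bounded_clinear_op_def by auto
  have bY: "bounded_linear Y" and cY: "\<And>c z. Y (c *\<^sub>C z) = c *\<^sub>C Y z"
    using assms(2) unfolding bounded_clinear_op_def by auto
  have c0: "\<And>c z. (\<lambda>_. 0::'a) (c *\<^sub>C z) = c *\<^sub>C (\<lambda>_. 0::'a) z" by simp
  have blp: "bounded_linear (\<lambda>x. X x + Y x)" using bX bY by (rule bounded_linear_add)
  have blm: "bounded_linear (\<lambda>x. X x - Y x)" using bX bY by (rule bounded_linear_sub)
  define M where "M = opmat X Y Y X"
  define N where "N = opmat (\<lambda>_. 0::'a) X Y (\<lambda>_. 0)"
  define m where "m = max (onorm (\<lambda>x. X x - Y x)) (onorm (\<lambda>x. X x + Y x))"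
  define K where "K = (1/2) * (onorm (\<lambda>x. X x + Y x) + onorm (\<lambda>x. X x - Y x))"
  have m0: "0 \<le> m" using onorm_pos_le[OF blp] by (simp add: m_def le_max_iff_disj)
  have K0: "0 \<le> K" using onorm_pos_le[OF blp] onorm_pos_le[OF blm] by (simp add: K_def)
  have boundM: "cmod (cinner (M u) v) \<le> m" if "norm u = 1" "norm v = 1" for u v
  proof -
    have "cmod (cinner (M u) v) \<le> norm (M u) * norm v" by (rule cauchy_schwarz)
    also have "\<dots> = norm (M u)" using that by simp
    also have "\<dots> \<le> m" unfolding M_def m_def using bX bY that(1) by (rule M_bound)
    finally show ?thesis .
  qed
  have boundN: "cmod (cinner (N u) v) \<le> K" if "norm u = 1" "norm v = 1" for u v
  proof -
    have "cmod (cinner (N u) v) \<le> norm (N u) * norm v" by (rule cauchy_schwarz)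
    also have "\<dots> = norm (N u)" using that by simp
    also have "\<dots> \<le> K" unfolding N_def K_def using bX bY that(1) by (rule N_bound)
    finally show ?thesis .
  qed
  define s where "s = complex_of_real (sqrt (1/2))"
  have ss: "s * cnj s = 1/2" by (simp add: s_def flip: of_real_mult)
  have cs: "(cmod s)\<^sup>2 = 1/2" by (simp add: s_def)
  have cis: "(cmod (\<i> * s))\<^sup>2 = 1/2" by (simp add: s_def norm_mult)
  have P1: "wq q (\<lambda>x. X x + Y x) \<le> 1 * wq2 q M"
  proof (rule pick[OF m0 boundM])
    show "s * cnj s + s * cnj s = 1" by (simp only: ss) simp
    show "(cmod s)\<^sup>2 + (cmod s)\<^sup>2 = 1" using cs by simp
    fix x y :: 'a
    have "cinner (M (s *\<^sub>C x, s *\<^sub>C x)) (s *\<^sub>C y, s *\<^sub>C y) = cinner (X x + Y x) y"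
      unfolding M_def opmat_inner[OF cX cY cY cX] cinner_add_left ss by simp
    then show "cmod (cinner (X x + Y x) y) = 1 * cmod (cinner (M (s *\<^sub>C x, s *\<^sub>C x)) (s *\<^sub>C y, s *\<^sub>C y))"
      by simp
  qed simp_all
  have P2: "wq q (\<lambda>x. X x - Y x) \<le> 1 * wq2 q M"
  proof (rule pick[OF m0 boundM])
    have "(- s) * cnj (- s) = s * cnj s" by simp
    then show "s * cnj s + (- s) * cnj (- s) = 1" by (simp only: ss) simp
    show "(cmod s)\<^sup>2 + (cmod (- s))\<^sup>2 = 1" using cs by simp
    fix x y :: 'a
    have "cinner (M (s *\<^sub>C x, (- s) *\<^sub>C x)) (s *\<^sub>C y, (- s) *\<^sub>C y) = cinner (X x - Y x) y"
    proof -
      have "cinner (M (s *\<^sub>C x, (- s) *\<^sub>C x)) (s *\<^sub>C y, (- s) *\<^sub>C y)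
          = (s * cnj s) * (2 * cinner (X x) y - 2 * cinner (Y x) y)"
        unfolding M_def opmat_inner[OF cX cY cY cX] by (simp add: algebra_simps)
      also have "\<dots> = cinner (X x - Y x) y" by (simp add: ss cinner_diff_left)
      finally show ?thesis .
    qed
    then show "cmod (cinner (X x - Y x) y) = 1 * cmod (cinner (M (s *\<^sub>C x, (- s) *\<^sub>C x)) (s *\<^sub>C y, (- s) *\<^sub>C y))"
      by simp
  qed simp_all
  have P3: "wq2 q M \<le> m"
    unfolding dsum_inner_eq by (rule radius_le[OF m0]) (rule boundM)
  have P4: "wq q (\<lambda>x. X x + Y x) \<le> 2 * wq2 q N"
  proof (rule pick[OF K0 boundN])
    show "s * cnj s + s * cnj s = 1" by (simp only: ss) simp
    show "(cmod s)\<^sup>2 + (cmod s)\<^sup>2 = 1" using cs by simp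
    fix x y :: 'a
    have "cinner (N (s *\<^sub>C x, s *\<^sub>C x)) (s *\<^sub>C y, s *\<^sub>C y) = (1/2) * cinner (X x + Y x) y"
    proof -
      have "cinner (N (s *\<^sub>C x, s *\<^sub>C x)) (s *\<^sub>C y, s *\<^sub>C y)
          = (s * cnj s) * (cinner (X x) y + cinner (Y x) y)"
        unfolding N_def opmat_inner[OF c0 cX cY c0] by (simp add: algebra_simps)
      also have "\<dots> = (1/2) * cinner (X x + Y x) y" by (simp add: ss cinner_add_left)
      finally show ?thesis .
    qed
    then have h: "cmod (cinner (N (s *\<^sub>C x, s *\<^sub>C x)) (s *\<^sub>C y, s *\<^sub>C y)) = cmod ((1/2) * cinner (X x + Y x) y)"
      by (rule arg_cong)
    show "cmod (cinner (X x + Y x) y) = 2 * cmod (cinner (N (s *\<^sub>C x, s *\<^sub>C x)) (s *\<^sub>C y, s *\<^sub>C y))"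
      by (simp only: h norm_mult) simp
  qed simp_all
  have P5: "wq q (\<lambda>x. X x - Y x) \<le> 2 * wq2 q N"
  proof (rule pick[OF K0 boundN])
    have "(\<i> * s) * cnj (\<i> * s) = s * cnj s" by (simp add: mult.commute mult.left_commute)
    then show "s * cnj s + (\<i> * s) * cnj (\<i> * s) = 1" by (simp only: ss) simp
    show "(cmod s)\<^sup>2 + (cmod (\<i> * s))\<^sup>2 = 1" using cs cis by simp
    fix x y :: 'a
    have "cinner (N (s *\<^sub>C x, (\<i> * s) *\<^sub>C x)) (s *\<^sub>C y, (\<i> * s) *\<^sub>C y) = (\<i> / 2) * cinner (X x - Y x) y"
    proof -
      have "cinner (N (s *\<^sub>C x, (\<i> * s) *\<^sub>C x)) (s *\<^sub>C y, (\<i> * s) *\<^sub>C y)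
          = (s * cnj s) * (\<i> * cinner (X x) y - \<i> * cinner (Y x) y)"
        unfolding N_def opmat_inner[OF c0 cX cY c0] by (simp add: algebra_simps)
      also have "\<dots> = (\<i> / 2) * cinner (X x - Y x) y" by (simp add: ss cinner_diff_left algebra_simps)
      finally show ?thesis .
    qed
    then have h: "cmod (cinner (N (s *\<^sub>C x, (\<i> * s) *\<^sub>C x)) (s *\<^sub>C y, (\<i> * s) *\<^sub>C y)) = cmod ((\<i> / 2) * cinner (X x - Y x) y)"
      by (rule arg_cong)
    show "cmod (cinner (X x - Y x) y) = 2 * cmod (cinner (N (s *\<^sub>C x, (\<i> * s) *\<^sub>C x)) (s *\<^sub>C y, (\<i> * s) *\<^sub>C y))"
      by (simp only: h norm_mult) (simp add: norm_divide)
  qed simp_all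
  have P6: "wq2 q N \<le> K"
    unfolding dsum_inner_eq by (rule radius_le[OF K0]) (rule boundN)
  show ?thesis
    using P1 P2 P3 P4 P5 P6 unfolding M_def N_def m_def K_def by auto
qed

end
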